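(* Let $n\ge1$, $m=2^n$, $A\subseteq\{0,1\}^n$, $a=|A|$. The rank of irreducibility of the orthogonal system $S_A$ equals $IR(S_A)=m-a$. Consequently, the average rank of irreducibility over all $2^m$ orthogonal systems $S_A$, $A\subseteq\{0,1\}^n$, equals $$2^{-m}\sum_{a=0}^{m}(m-a)\binom{m}{a}=\frac{m}{2}.$$
   Context: Boolean algebras are in the language $\{\vee,\cdot,\bar{\ },0,1\}$; the boolean algebra of rank $r\ge1$ is the power set algebra of an $r$-element set. Orthogonal variables: $Z=\{z_\alpha:\alpha\in\{0,1\}^n\}$, $|Z|=m=2^n$. For $A\subseteq\{0,1\}^n$ the orthogonal system is $$S_A=\{z_\alpha=0\mid\alpha\in A\}\cup\{z_\alpha z_\beta=0\mid \alpha\ne\beta\}\cup\{\textstyle\bigvee_{\alpha}z_\alpha=1\}.$$ A nonempty algebraic set (solution set of a system) is irreducible if it is not a finite union of proper algebraic subsets. The rank of irreducibility $IR(S)$ of a system $S$ is the number $k\ge1$ such that the solution set of $S$ is irreducible over the boolean algebra of rank $k$ but reducible over the boolean algebra of every rank $r<k$; if $S$ is inconsistent over every nontrivial boolean algebra, $IR(S)=0$. *)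

theory Defs
  imports Complex_Main "HOL-Library.FuncSet"
begin

datatype 'v bterm =
    Var 'v
  | Zero
  | One
  | Join "'v bterm" "'v bterm"
  | Meet "'v bterm" "'v bterm"
  | Compl "'v bterm"

fun bvars :: "'v bterm \<Rightarrow> 'v set" where
  "bvars (Var v) = {v}"
| "bvars Zero = {}"
| "bvars One = {}"
| "bvars (Join s t) = bvars s \<union> bvars t"
| "bvars (Meet s t) = bvars s \<union> bvars t"
| "bvars (Compl s) = bvars s"

text \<open>The boolean algebra of rank r is the power set algebra of the r-element set {..<r}.
  Evaluation of a term at a point p.\<close>
fun beval :: "nat \<Rightarrow> ('v \<Rightarrow> nat set) \<Rightarrow> 'v bterm \<Rightarrow> nat set" where
  "beval r p (Var v) = p v"
| "beval r p Zero = {}"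
| "beval r p One = {..<r}"
| "beval r p (Join s t) = beval r p s \<union> beval r p t"
| "beval r p (Meet s t) = beval r p s \<inter> beval r p t"
| "beval r p (Compl s) = {..<r} - beval r p s"

type_synonym 'v equation = "'v bterm \<times> 'v bterm"

definition sol :: "nat \<Rightarrow> 'v set \<Rightarrow> 'v equation set \<Rightarrow> ('v \<Rightarrow> nat set) set" where
  "sol r Z S = {p \<in> Z \<rightarrow>\<^sub>E Pow {..<r}. \<forall>(s, t) \<in> S. beval r p s = beval r p t}"

definition system_over :: "'v set \<Rightarrow> 'v equation set \<Rightarrow> bool" where
  "system_over Z S \<longleftrightarrow> (\<forall>(s, t) \<in> S. bvars s \<union> bvars t \<subseteq> Z)"

definition algebraic :: "nat \<Rightarrow> 'v set \<Rightarrow> ('v \<Rightarrow> nat set) set \<Rightarrow> bool" where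
  "algebraic r Z Y \<longleftrightarrow> (\<exists>S. system_over Z S \<and> Y = sol r Z S)"

definition irreducible_alg :: "nat \<Rightarrow> 'v set \<Rightarrow> ('v \<Rightarrow> nat set) set \<Rightarrow> bool" where
  "irreducible_alg r Z Y \<longleftrightarrow>
     Y \<noteq> {} \<and> algebraic r Z Y \<and>
     \<not> (\<exists>F. finite F \<and> (\<forall>Y' \<in> F. algebraic r Z Y' \<and> Y' \<subset> Y) \<and> Y = \<Union>F)"

definition is_IR :: "'v set \<Rightarrow> 'v equation set \<Rightarrow> nat \<Rightarrow> bool" where
  "is_IR Z S k \<longleftrightarrow>
     (k = 0 \<and> (\<forall>r \<ge> 1. sol r Z S = {})) \<or>
     (k \<ge> 1 \<and> irreducible_alg k Z (sol k Z S) \<and>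
        (\<forall>r. 1 \<le> r \<and> r < k \<longrightarrow> \<not> irreducible_alg r Z (sol r Z S)))"

definition IR :: "'v set \<Rightarrow> 'v equation set \<Rightarrow> nat" where
  "IR Z S = (THE k. is_IR Z S k)"

definition cube :: "nat \<Rightarrow> bool list set" where
  "cube n = {xs. length xs = n}"

definition big_join :: "nat \<Rightarrow> bool list bterm" where
  "big_join n = foldr (\<lambda>\<alpha> t. Join (Var \<alpha>) t) (List.n_lists n [False, True]) Zero"

definition orth_system :: "nat \<Rightarrow> bool list set \<Rightarrow> bool list equation set" where
  "orth_system n A =
     {(Var \<alpha>, Zero) | \<alpha>. \<alpha> \<in> A}
     \<union> {(Meet (Var \<alpha>) (Var \<beta>), Zero) | \<alpha> \<beta>. \<alpha> \<in> cube n \<and> \<beta> \<in> cube n \<and> \<alpha> \<noteq> \<beta>}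
     \<union> {(big_join n, One)}"

end

theory Submission imports Defs begin

lemma beval_foldr: "beval r p (foldr (\<lambda>\<alpha> t. Join (Var \<alpha>) t) xs Zero) = (\<Union>\<alpha>\<in>set xs. p \<alpha>)"
  by (induction xs) auto

lemma set_nl: "set (List.n_lists n [False, True]) = cube n"
  unfolding set_n_lists cube_def by auto

lemma beval_big_join: "beval r p (big_join n) = (\<Union>\<alpha>\<in>cube n. p \<alpha>)"
  unfolding big_join_def beval_foldr set_nl ..

lemma bvars_foldr: "bvars (foldr (\<lambda>\<alpha> t. Join (Var \<alpha>) t) xs Zero) = set xs"
  by (induction xs) auto

lemma sol_char:
  "p \<in> sol r (cube n) (orth_system n A) \<longleftrightarrow>
    p \<in> cube n \<rightarrow>\<^sub>E Pow {..<r} \<and> (\<forall>\<alpha>\<in>A. p \<alpha> = {})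
    \<and> (\<forall>\<alpha>\<in>cube n. \<forall>\<beta>\<in>cube n. \<alpha> \<noteq> \<beta> \<longrightarrow> p \<alpha> \<inter> p \<beta> = {})
    \<and> (\<Union>\<alpha>\<in>cube n. p \<alpha>) = {..<r}"
proof -
  have "(\<forall>(s, t)\<in>orth_system n A. beval r p s = beval r p t) \<longleftrightarrow>
    (\<forall>\<alpha>\<in>A. p \<alpha> = {})
    \<and> (\<forall>\<alpha>\<in>cube n. \<forall>\<beta>\<in>cube n. \<alpha> \<noteq> \<beta> \<longrightarrow> p \<alpha> \<inter> p \<beta> = {})
    \<and> (\<Union>\<alpha>\<in>cube n. p \<alpha>) = {..<r}"
  proof
    assume H: "\<forall>(s, t)\<in>orth_system n A. beval r p s = beval r p t"
    have 1: "\<forall>\<alpha>\<in>A. p \<alpha> = {}"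
    proof
      fix \<alpha> assume "\<alpha> \<in> A"
      then have "(Var \<alpha>, Zero) \<in> orth_system n A" unfolding orth_system_def by blast
      with H show "p \<alpha> = {}" by auto
    qed
    have 2: "\<forall>\<alpha>\<in>cube n. \<forall>\<beta>\<in>cube n. \<alpha> \<noteq> \<beta> \<longrightarrow> p \<alpha> \<inter> p \<beta> = {}"
    proof (intro ballI impI)
      fix \<alpha> \<beta> assume "\<alpha> \<in> cube n" "\<beta> \<in> cube n" "\<alpha> \<noteq> \<beta>"
      then have "(Meet (Var \<alpha>) (Var \<beta>), Zero) \<in> orth_system n A" unfolding orth_system_def by blast
      with H have "beval r p (Meet (Var \<alpha>) (Var \<beta>)) = beval r p Zero" by fast
      then show "p \<alpha> \<inter> p \<beta> = {}" by simp
    qed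
    have "(big_join n, One) \<in> orth_system n A" unfolding orth_system_def by blast
    with H have "beval r p (big_join n) = beval r p One" by fast
    then have 3: "(\<Union>\<alpha>\<in>cube n. p \<alpha>) = {..<r}" by (simp add: beval_big_join)
    show "(\<forall>\<alpha>\<in>A. p \<alpha> = {})
    \<and> (\<forall>\<alpha>\<in>cube n. \<forall>\<beta>\<in>cube n. \<alpha> \<noteq> \<beta> \<longrightarrow> p \<alpha> \<inter> p \<beta> = {})
    \<and> (\<Union>\<alpha>\<in>cube n. p \<alpha>) = {..<r}" using 1 2 3 by blast
  next
    assume "(\<forall>\<alpha>\<in>A. p \<alpha> = {})
    \<and> (\<forall>\<alpha>\<in>cube n. \<forall>\<beta>\<in>cube n. \<alpha> \<noteq> \<beta> \<longrightarrow> p \<alpha> \<inter> p \<beta> = {})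
    \<and> (\<Union>\<alpha>\<in>cube n. p \<alpha>) = {..<r}"
    then show "\<forall>(s, t)\<in>orth_system n A. beval r p s = beval r p t"
      unfolding orth_system_def by (auto simp: beval_big_join)
  qed
  then show ?thesis unfolding sol_def by auto
qed

lemma system_over_orth: "A \<subseteq> cube n \<Longrightarrow> system_over (cube n) (orth_system n A)"
  unfolding system_over_def orth_system_def big_join_def by (auto simp: bvars_foldr set_nl)

fun bev :: "('v \<Rightarrow> bool) \<Rightarrow> 'v bterm \<Rightarrow> bool" where
  "bev f (Var v) = f v"
| "bev f Zero = False"
| "bev f One = True"
| "bev f (Join s t) = (bev f s \<or> bev f t)"
| "bev f (Meet s t) = (bev f s \<and> bev f t)"
| "bev f (Compl s) = (\<not> bev f s)"

lemma beval_sub: "(\<forall>v\<in>bvars t. p v \<subseteq> {..<r}) \<Longrightarrow> beval r p t \<subseteq> {..<r}"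
  by (induction t) auto

lemma beval_bev: "i < r \<Longrightarrow> (i \<in> beval r p t) = bev (\<lambda>v. i \<in> p v) t"
  by (induction t) auto

lemma bev_cong: "(\<And>v. v \<in> bvars t \<Longrightarrow> f v = g v) \<Longrightarrow> bev f t = bev g t"
  by (induction t) auto



lemma finite_cube: "finite (cube n)"
proof -
  have "cube n = {xs. set xs \<subseteq> (UNIV::bool set) \<and> length xs = n}" unfolding cube_def by auto
  then show ?thesis using finite_lists_length_eq[of "UNIV::bool set" n] by simp
qed

lemma card_cube: "card (cube n) = 2 ^ n"
proof -
  have "cube n = {xs. set xs \<subseteq> (UNIV::bool set) \<and> length xs = n}" unfolding cube_def by auto
  then show ?thesis using card_lists_length_eq[of "UNIV::bool set" n] by simp
qed

lemma sol_mono: "S \<subseteq> S' \<Longrightarrow> sol r Z S' \<subseteq> sol r Z S"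
  unfolding sol_def by fast

lemma sol_D:
  assumes "p \<in> sol r (cube n) (orth_system n A)"
  shows "p \<in> cube n \<rightarrow>\<^sub>E Pow {..<r}" "\<And>\<alpha>. \<alpha> \<in> A \<Longrightarrow> p \<alpha> = {}"
    "\<And>\<alpha> \<beta>. \<alpha> \<in> cube n \<Longrightarrow> \<beta> \<in> cube n \<Longrightarrow> \<alpha> \<noteq> \<beta> \<Longrightarrow> p \<alpha> \<inter> p \<beta> = {}"
    "(\<Union>\<alpha>\<in>cube n. p \<alpha>) = {..<r}"
  using assms unfolding sol_char by blast+

lemma sol_point:
  assumes "p \<in> sol r (cube n) (orth_system n A)" "i < r"
  shows "\<exists>\<alpha>\<in>cube n - A. \<forall>v\<in>cube n. (i \<in> p v) = (v = \<alpha>)"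
proof -
  have "i \<in> (\<Union>\<alpha>\<in>cube n. p \<alpha>)" using sol_D(4)[OF assms(1)] assms(2) by simp
  then obtain \<alpha> where a: "\<alpha> \<in> cube n" "i \<in> p \<alpha>" by blast
  have "\<alpha> \<notin> A"
  proof
    assume "\<alpha> \<in> A" then have "p \<alpha> = {}" by (rule sol_D(2)[OF assms(1)])
    then show False using a by simp
  qed
  moreover have "\<forall>v\<in>cube n. (i \<in> p v) = (v = \<alpha>)"
  proof
    fix v assume v: "v \<in> cube n"
    show "(i \<in> p v) = (v = \<alpha>)"
    proof
      assume "i \<in> p v"
      show "v = \<alpha>"
      proof (rule ccontr)
        assume "v \<noteq> \<alpha>"
        then have "p v \<inter> p \<alpha> = {}" using sol_D(3)[OF assms(1) v a(1)] by blast
        then show False using \<open>i \<in> p v\<close> a(2) by blast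
      qed
    qed (use a in simp)
  qed
  ultimately show ?thesis using a by blast
qed

definition pt :: "nat \<Rightarrow> nat \<Rightarrow> bool list \<Rightarrow> bool list \<Rightarrow> nat set" where
  "pt n r \<beta> = (\<lambda>\<alpha>. if \<alpha> \<in> cube n then (if \<alpha> = \<beta> then {..<r} else {}) else undefined)"

lemma pt_sol:
  assumes "A \<subseteq> cube n" "\<beta> \<in> cube n - A"
  shows "pt n r \<beta> \<in> sol r (cube n) (orth_system n A)"
  unfolding sol_char using assms by (auto simp: pt_def split: if_splits)

lemma pigeon:
  assumes "p \<in> sol r (cube n) (orth_system n A)" "r < card (cube n - A)"
  shows "\<exists>\<beta>\<in>cube n - A. p \<beta> = {}"
proof (rule ccontr)
  assume "\<not> ?thesis"
  then have ne: "\<forall>\<beta>\<in>cube n - A. p \<beta> \<noteq> {}" by blast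
  define f where "f \<beta> = (SOME i. i \<in> p \<beta>)" for \<beta>
  have fin: "\<forall>\<beta>\<in>cube n - A. f \<beta> \<in> p \<beta>" using ne unfolding f_def by (metis all_not_in_conv someI)
  have "inj_on f (cube n - A)"
  proof (rule inj_onI)
    fix x y assume "x \<in> cube n - A" "y \<in> cube n - A" "f x = f y"
    then have "f x \<in> p x \<inter> p y" using fin by (metis IntI)
    then show "x = y" using sol_D(3)[OF assms(1), of x y] \<open>x \<in> cube n - A\<close> \<open>y \<in> cube n - A\<close> by blast
  qed
  moreover have "f ` (cube n - A) \<subseteq> {..<r}"
  proof
    fix i assume "i \<in> f ` (cube n - A)"
    then obtain \<beta> where "\<beta> \<in> cube n - A" "i = f \<beta>" by blast
    then have "i \<in> (\<Union>\<alpha>\<in>cube n. p \<alpha>)" using fin by blast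
    then show "i \<in> {..<r}" using sol_D(4)[OF assms(1)] by simp
  qed
  ultimately have "card (cube n - A) \<le> card {..<r::nat}" by (intro card_inj_on_le) auto
  then show False using assms(2) by simp
qed

lemma reducible:
  assumes "A \<subseteq> cube n" "1 \<le> r" "r < card (cube n - A)"
  shows "\<not> irreducible_alg r (cube n) (sol r (cube n) (orth_system n A))"
proof -
  let ?Y = "sol r (cube n) (orth_system n A)"
  define F where "F = (\<lambda>\<beta>. sol r (cube n) (orth_system n (insert \<beta> A))) ` (cube n - A)"
  have "finite F" unfolding F_def using finite_cube by auto
  moreover have "\<forall>Y'\<in>F. algebraic r (cube n) Y' \<and> Y' \<subset> ?Y"
  proof
    fix Y' assume "Y' \<in> F"
    then obtain \<beta> where b: "\<beta> \<in> cube n - A" and Y': "Y' = sol r (cube n) (orth_system n (insert \<beta> A))"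
      unfolding F_def by blast
    have "algebraic r (cube n) Y'" unfolding algebraic_def Y'
      using system_over_orth[of "insert \<beta> A" n] assms(1) b by blast
    moreover have "Y' \<subseteq> ?Y" unfolding Y' by (rule sol_mono) (auto simp: orth_system_def)
    moreover have "pt n r \<beta> \<in> ?Y" using pt_sol assms(1) b by blast
    moreover have "pt n r \<beta> \<notin> Y'"
    proof
      assume "pt n r \<beta> \<in> Y'"
      then have "pt n r \<beta> \<beta> = {}" unfolding Y' by (rule sol_D(2)) simp
      then have "{..<r} = ({}::nat set)" using b by (simp add: pt_def)
      moreover have "0 \<in> {..<r}" using assms(2) by simp
      ultimately show False by simp
    qed
    ultimately show "algebraic r (cube n) Y' \<and> Y' \<subset> ?Y" by blast
  qed
  moreover have "?Y = \<Union>F"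
  proof
    show "?Y \<subseteq> \<Union>F"
    proof
      fix p assume p: "p \<in> ?Y"
      then obtain \<beta> where b: "\<beta> \<in> cube n - A" "p \<beta> = {}" using pigeon assms(3) by blast
      have "p \<in> sol r (cube n) (orth_system n (insert \<beta> A))"
        using p b unfolding sol_char by auto
      then show "p \<in> \<Union>F" unfolding F_def using b by blast
    qed
    show "\<Union>F \<subseteq> ?Y"
    proof
      fix p assume "p \<in> \<Union>F"
      then obtain \<beta> where "p \<in> sol r (cube n) (orth_system n (insert \<beta> A))" unfolding F_def by blast
      then show "p \<in> ?Y" unfolding sol_char by auto
    qed
  qed
  ultimately show ?thesis unfolding irreducible_alg_def by blast
qed

lemma irreducible:
  assumes "A \<subseteq> cube n" "1 \<le> card (cube n - A)" "card (cube n - A) \<le> r"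
  shows "irreducible_alg r (cube n) (sol r (cube n) (orth_system n A))"
proof -
  let ?C = "cube n - A"
  let ?Y = "sol r (cube n) (orth_system n A)"
  have finC: "finite ?C" using finite_cube by auto
  obtain h where h: "bij_betw h {0..<card ?C} ?C" using ex_bij_betw_nat_finite[OF finC] by blast
  define g where "g i = h (if i < card ?C then i else 0)" for i
  have gC: "g i \<in> ?C" for i using h assms(2) unfolding g_def bij_betw_def by auto
  have gsurj: "\<exists>j<r. g j = \<alpha>" if "\<alpha> \<in> ?C" for \<alpha>
  proof -
    have "\<alpha> \<in> h ` {0..<card ?C}" using that h unfolding bij_betw_def by simp
    then obtain j where "j < card ?C" "h j = \<alpha>" by auto
    then show ?thesis using assms(3) unfolding g_def by (intro exI[of _ j]) auto
  qed
  define p0 where "p0 = (\<lambda>\<alpha>. if \<alpha> \<in> cube n then {i. i < r \<and> g i = \<alpha>} else undefined)"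
  have p0: "p0 \<in> ?Y"
    unfolding sol_char
  proof (intro conjI)
    show "p0 \<in> cube n \<rightarrow>\<^sub>E Pow {..<r}" unfolding p0_def by auto
    show "\<forall>\<alpha>\<in>A. p0 \<alpha> = {}" unfolding p0_def using gC assms(1) by auto
    show "\<forall>\<alpha>\<in>cube n. \<forall>\<beta>\<in>cube n. \<alpha> \<noteq> \<beta> \<longrightarrow> p0 \<alpha> \<inter> p0 \<beta> = {}" unfolding p0_def by auto
    show "(\<Union>\<alpha>\<in>cube n. p0 \<alpha>) = {..<r}" unfolding p0_def using gC by auto
  qed
  have alg: "algebraic r (cube n) ?Y" unfolding algebraic_def using system_over_orth[OF assms(1)] by blast
  have "\<not> (\<exists>F. finite F \<and> (\<forall>Y' \<in> F. algebraic r (cube n) Y' \<and> Y' \<subset> ?Y) \<and> ?Y = \<Union>F)"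
  proof
    assume "\<exists>F. finite F \<and> (\<forall>Y' \<in> F. algebraic r (cube n) Y' \<and> Y' \<subset> ?Y) \<and> ?Y = \<Union>F"
    then obtain F where F: "\<forall>Y' \<in> F. algebraic r (cube n) Y' \<and> Y' \<subset> ?Y" "?Y = \<Union>F" by blast
    have "p0 \<in> \<Union>F" using p0 F(2) by simp
    then obtain Y' where Y': "Y' \<in> F" "p0 \<in> Y'" by blast
    have "algebraic r (cube n) Y' \<and> Y' \<subset> ?Y" using F(1) Y'(1) by blast
    then have alg': "algebraic r (cube n) Y'" and psub: "Y' \<subset> ?Y" by auto
    then obtain S' where S': "system_over (cube n) S'" "Y' = sol r (cube n) S'"
      unfolding algebraic_def by blast
    have "?Y \<subseteq> Y'"
    proof
      fix q assume q: "q \<in> ?Y"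
      have qE: "q \<in> cube n \<rightarrow>\<^sub>E Pow {..<r}" by (rule sol_D(1)[OF q])
      have "beval r q s = beval r q t" if st: "(s, t) \<in> S'" for s t
      proof -
        have bv: "bvars s \<subseteq> cube n" "bvars t \<subseteq> cube n" using S'(1) st unfolding system_over_def by auto
        have "\<forall>(s, t)\<in>S'. beval r p0 s = beval r p0 t" using Y'(2) unfolding S'(2) sol_def by blast
        then have p0eq: "beval r p0 s = beval r p0 t" using st by fast
        have sub: "beval r q s \<subseteq> {..<r}" "beval r q t \<subseteq> {..<r}"
          using bv qE by (auto intro!: beval_sub)
        have "(i \<in> beval r q s) = (i \<in> beval r q t)" if i: "i < r" for i
        proof -
          obtain \<alpha> where a: "\<alpha> \<in> ?C" "\<forall>v\<in>cube n. (i \<in> q v) = (v = \<alpha>)"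
            using sol_point[OF q i] by blast
          obtain j where j: "j < r" "g j = \<alpha>" using gsurj[OF a(1)] by blast
          have pj: "\<forall>v\<in>cube n. (j \<in> p0 v) = (v = \<alpha>)" unfolding p0_def using j by auto
          have "(i \<in> beval r q s) = bev (\<lambda>v. i \<in> q v) s" by (rule beval_bev[OF i])
          also have "\<dots> = bev (\<lambda>v. j \<in> p0 v) s" using bv(1) a(2) pj by (intro bev_cong) auto
          also have "\<dots> = (j \<in> beval r p0 s)" by (rule beval_bev[OF j(1), symmetric])
          also have "\<dots> = (j \<in> beval r p0 t)" using p0eq by simp
          also have "\<dots> = bev (\<lambda>v. j \<in> p0 v) t" by (rule beval_bev[OF j(1)])
          also have "\<dots> = bev (\<lambda>v. i \<in> q v) t" using bv(2) a(2) pj by (intro bev_cong) auto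
          also have "\<dots> = (i \<in> beval r q t)" by (rule beval_bev[OF i, symmetric])
          finally show ?thesis .
        qed
        then show ?thesis using sub by (intro set_eqI) (metis lessThan_iff subsetD)
      qed
      then have "\<forall>(s, t)\<in>S'. beval r q s = beval r q t" by fast
      then show "q \<in> Y'" unfolding S'(2) sol_def using qE by blast
    qed
    then show False using psub by (metis psubset_eq subset_antisym)
  qed
  moreover have "?Y \<noteq> {}" using p0 by blast
  ultimately show ?thesis unfolding irreducible_alg_def using alg by blast
qed

lemma is_IR_unique:
  shows "is_IR Z S k \<Longrightarrow> is_IR Z S k' \<Longrightarrow> k = k'"
proof -
  have ne: "sol r Z S \<noteq> {}" if "irreducible_alg r Z (sol r Z S)" for r
    using that unfolding irreducible_alg_def by blast
  assume a: "is_IR Z S k" "is_IR Z S k'"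
  show "k = k'"
  proof (rule ccontr)
    assume "k \<noteq> k'"
    then consider "k < k'" | "k' < k" by linarith
    then show False
    proof cases
      case 1
      then have "k' \<ge> 1" using a(2) unfolding is_IR_def by auto
      then show False using a 1 ne unfolding is_IR_def by (metis less_one not_le)
    next
      case 2
      then have "k \<ge> 1" using a(1) unfolding is_IR_def by auto
      then show False using a 2 ne unfolding is_IR_def by (metis less_one not_le)
    qed
  qed
qed

lemma IR_eq: "is_IR Z S k \<Longrightarrow> IR Z S = k"
  unfolding IR_def using is_IR_unique by blast

lemma IR_orth:
  assumes "A \<subseteq> cube n"
  shows "IR (cube n) (orth_system n A) = 2 ^ n - card A"
proof -
  have finA: "finite A" using assms finite_cube finite_subset by blast
  have c: "card (cube n - A) = 2 ^ n - card A" using card_Diff_subset[OF finA assms] card_cube by simp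
  show ?thesis
  proof (cases "card (cube n - A) = 0")
    case True
    then have "cube n - A = {}" using finite_cube by auto
    then have AZ: "A = cube n" using assms by blast
    have "sol r (cube n) (orth_system n A) = {}" if "r \<ge> 1" for r
    proof (rule ccontr)
      assume "sol r (cube n) (orth_system n A) \<noteq> {}"
      then obtain p where p: "p \<in> sol r (cube n) (orth_system n A)" by blast
      from sol_point[OF p, of 0] that AZ show False by auto
    qed
    then have "is_IR (cube n) (orth_system n A) 0" unfolding is_IR_def by blast
    then show ?thesis using IR_eq c True by simp
  next
    case False
    then have "is_IR (cube n) (orth_system n A) (card (cube n - A))"
      unfolding is_IR_def using irreducible[OF assms] reducible[OF assms] by auto
    then show ?thesis using IR_eq c by simp
  qed
qed

lemma binsum: "(\<Sum>a = 0..m. (m - a) * (m choose a)) = m * 2 ^ (m - 1)"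
proof -
  have "(\<Sum>a = 0..m. (m - a) * (m choose a)) = (\<Sum>a = 0..m. (m - (m + 0 - a)) * (m choose (m + 0 - a)))"
    by (rule sum.atLeastAtMost_rev)
  also have "\<dots> = (\<Sum>a = 0..m. a * (m choose a))"
    by (intro sum.cong) (auto simp: binomial_symmetric[symmetric])
  also have "\<dots> = m * 2 ^ (m - 1)" using choose_linear_sum[of m] by (simp add: atMost_atLeast0)
  finally show ?thesis .
qed

lemma sum_pow_card:
  assumes "finite Z"
  shows "(\<Sum>B \<in> Pow Z. f (card B)) = (\<Sum>a = 0..card Z. f a * real (card Z choose a))"
proof -
  have "(\<Sum>B \<in> Pow Z. f (card B)) = (\<Sum>a = 0..card Z. \<Sum>B \<in> {B. B \<in> Pow Z \<and> card B = a}. f (card B))"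
    using assms by (intro sum.group[symmetric]) (auto intro: card_mono)
  also have "\<dots> = (\<Sum>a = 0..card Z. f a * real (card Z choose a))"
  proof (intro sum.cong refl)
    fix a
    have "(\<Sum>B \<in> {B. B \<in> Pow Z \<and> card B = a}. f (card B)) = (\<Sum>B \<in> {B. B \<subseteq> Z \<and> card B = a}. f a)"
      by (intro sum.cong) auto
    also have "\<dots> = f a * real (card Z choose a)" using n_subsets[OF assms, of a] by simp
    finally show "(\<Sum>B \<in> {B. B \<in> Pow Z \<and> card B = a}. f (card B)) = f a * real (card Z choose a)" .
  qed
  finally show ?thesis .
qed

theorem mainTheorem5:
  fixes n :: nat and A :: "bool list set"
  assumes "n \<ge> 1" and "A \<subseteq> cube n"
  shows "IR (cube n) (orth_system n A) = 2 ^ n - card A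
    \<and> (\<Sum>B \<in> Pow (cube n). real (IR (cube n) (orth_system n B))) / 2 ^ (2 ^ n)
        = (\<Sum>a = 0..2 ^ n. real (2 ^ n - a) * real ((2 ^ n) choose a)) / 2 ^ (2 ^ n)
    \<and> (\<Sum>a = 0..2 ^ n. real (2 ^ n - a) * real ((2 ^ n) choose a)) / 2 ^ (2 ^ n)
        = real (2 ^ n) / 2"
proof (intro conjI)
  show "IR (cube n) (orth_system n A) = 2 ^ n - card A" using IR_orth[OF assms(2)] .
  have "(\<Sum>B \<in> Pow (cube n). real (IR (cube n) (orth_system n B)))
      = (\<Sum>B \<in> Pow (cube n). real (2 ^ n - card B))"
    by (intro sum.cong refl) (simp add: IR_orth)
  also have "\<dots> = (\<Sum>a = 0..2 ^ n. real (2 ^ n - a) * real ((2 ^ n) choose a))"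
    using sum_pow_card[OF finite_cube, of "\<lambda>a. real (2 ^ n - a)" n] by (simp add: card_cube)
  finally show "(\<Sum>B \<in> Pow (cube n). real (IR (cube n) (orth_system n B))) / 2 ^ (2 ^ n)
        = (\<Sum>a = 0..2 ^ n. real (2 ^ n - a) * real ((2 ^ n) choose a)) / 2 ^ (2 ^ n)" by simp
  define m :: nat where "m = 2 ^ n"
  have m1: "m \<ge> 1" unfolding m_def by simp
  have "(\<Sum>a = 0..m. real (m - a) * real (m choose a)) = real (\<Sum>a = 0..m. (m - a) * (m choose a))"
    by simp
  also have "\<dots> = real m * 2 ^ (m - 1)" unfolding binsum by simp
  finally have e: "(\<Sum>a = 0..m. real (m - a) * real (m choose a)) = real m * 2 ^ (m - 1)" .
  have p: "(2::real) ^ m = 2 * 2 ^ (m - 1)" using m1 by (metis Suc_diff_le diff_Suc_1 power_Suc)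
  have "(\<Sum>a = 0..m. real (m - a) * real (m choose a)) / 2 ^ m = real m / 2"
    unfolding e p by simp
  then show "(\<Sum>a = 0..2 ^ n. real (2 ^ n - a) * real ((2 ^ n) choose a)) / 2 ^ (2 ^ n)
        = real (2 ^ n) / 2" unfolding m_def by simp
qed

end
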